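(* Let $Q$ be an $n\times n$ real symmetric matrix, let $\Delta_n := \{x \in \mathbb{R}^n : x \ge 0,\ \sum_{j=1}^n x_j = 1\}$, and let $\nu(Q) := \min_{x \in \Delta_n} x^TQx$. For $x \in \Delta_n$ let $\mathcal{P}(x) = \{j : x_j > 0\}$, and let $e_j$ denote the $j$-th unit vector of $\mathbb{R}^n$. Then \[ \nu(Q) = \min_{x \in \Delta_n} \max_{j \in \mathcal{P}(x)} e_j^T Q x . \] *)

theory Defs
  imports "HOL-Analysis.Analysis"
begin

definition std_simplex :: "(real ^ 'n) set" where
  "std_simplex = {x. (\<forall>j. 0 \<le> x $ j) \<and> (\<Sum>j\<in>UNIV. x $ j) = 1}"

definition supp_idx :: "real ^ 'n \<Rightarrow> 'n set" where
  "supp_idx x = {j. x $ j > 0}"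

text \<open>nu(Q) = min over the simplex of x^T Q x (the minimum exists by compactness;
  we define it as the infimum of the attained values).\<close>
definition nu :: "real ^ 'n ^ 'n \<Rightarrow> real" where
  "nu Q = Inf {x \<bullet> (Q *v x) | x. x \<in> std_simplex}"

end

theory Submission
  imports Defs
begin

lemma simplex_compact: "compact (std_simplex :: (real^'n) set)"
proof (subst compact_eq_bounded_closed, intro conjI)
  show "bounded (std_simplex :: (real^'n) set)"
    unfolding bounded_iff
  proof (intro exI ballI)
    fix x :: "real^'n" assume x: "x \<in> std_simplex"
    have "norm x \<le> (\<Sum>j\<in>UNIV. \<bar>x $ j\<bar>)" by (rule norm_le_l1_cart)
    also have "\<dots> = (\<Sum>j\<in>UNIV. x $ j)" using x by (simp add: std_simplex_def)
    also have "\<dots> = 1" using x by (simp add: std_simplex_def)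
    finally show "norm x \<le> 1" .
  qed
  show "closed (std_simplex :: (real^'n) set)"
    unfolding std_simplex_def
    by (intro closed_Collect_conj closed_Collect_all closed_Collect_le closed_Collect_eq continuous_intros)
qed

lemma simplex_nonempty: "(std_simplex :: (real^'n) set) \<noteq> {}"
proof -
  have "(\<chi> j. 1 / real CARD('n)) \<in> (std_simplex :: (real^'n) set)"
    by (simp add: std_simplex_def)
  then show ?thesis by blast
qed

lemma quad_expand:
  fixes Q :: "real ^ 'n ^ 'n"
  assumes "transpose Q = Q"
  shows "(x + t *\<^sub>R d) \<bullet> (Q *v (x + t *\<^sub>R d)) =
     x \<bullet> (Q *v x) + 2 * t * (d \<bullet> (Q *v x)) + t^2 * (d \<bullet> (Q *v d))"
proof -
  have sym: "x \<bullet> (Q *v d) = d \<bullet> (Q *v x)"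
  proof -
    have "x \<bullet> (Q *v d) = (x v* Q) \<bullet> d" by (simp add: dot_lmul_matrix)
    also have "x v* Q = transpose Q *v x" by simp
    also have "\<dots> = Q *v x" using assms by simp
    finally show ?thesis by (simp add: inner_commute)
  qed
  show ?thesis
    by (simp add: matrix_vector_right_distrib matrix_vector_mult_scaleR inner_add_left
        inner_add_right sym power2_eq_square algebra_simps)
qed

lemma quad_sum: "x \<bullet> (Q *v x) = (\<Sum>k\<in>UNIV. x $ k * (Q *v x) $ k)"
  by (simp add: inner_vec_def)

lemma quad_le_max:
  fixes Q :: "real ^ 'n ^ 'n"
  assumes x: "x \<in> std_simplex"
  shows "x \<bullet> (Q *v x) \<le> Max ((\<lambda>j. axis j 1 \<bullet> (Q *v x)) ` supp_idx x)"
    and "supp_idx x \<noteq> {}"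
proof -
  let ?M = "Max ((\<lambda>j. axis j 1 \<bullet> (Q *v x)) ` supp_idx x)"
  have nn: "\<And>j. 0 \<le> x $ j" and s1: "(\<Sum>j\<in>UNIV. x $ j) = 1" using x by (auto simp: std_simplex_def)
  show ne: "supp_idx x \<noteq> {}"
  proof
    assume "supp_idx x = {}"
    then have "\<And>j. x $ j = 0"
    proof -
      fix j assume "supp_idx x = {}"
      then have "\<not> 0 < x $ j" by (auto simp: supp_idx_def)
      then show "x $ j = 0" using nn[of j] by linarith
    qed
    then show False using s1 by simp
  qed
  have sub: "(\<Sum>j\<in>UNIV. x $ j) = (\<Sum>j\<in>supp_idx x. x $ j)"
    by (rule sum.mono_neutral_right) (auto simp: supp_idx_def intro: antisym nn)
  have "x \<bullet> (Q *v x) = (\<Sum>k\<in>UNIV. x $ k * (Q *v x) $ k)" by (rule quad_sum)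
  also have "\<dots> = (\<Sum>k\<in>supp_idx x. x $ k * (Q *v x) $ k)"
    by (rule sum.mono_neutral_right) (auto simp: supp_idx_def intro: antisym nn)
  also have "\<dots> \<le> (\<Sum>k\<in>supp_idx x. x $ k * ?M)"
  proof (rule sum_mono)
    fix k assume k: "k \<in> supp_idx x"
    have "axis k 1 \<bullet> (Q *v x) \<le> ?M" using k by (intro Max_ge) auto
    then have "(Q *v x) $ k \<le> ?M" by (simp add: inner_axis')
    then show "x $ k * (Q *v x) $ k \<le> x $ k * ?M" using nn by (simp add: mult_left_mono)
  qed
  also have "\<dots> = ?M" using sub s1 by (simp add: sum_distrib_right[symmetric])
  finally show "x \<bullet> (Q *v x) \<le> ?M" .
qed

lemma minimizer_kkt:
  fixes Q :: "real ^ 'n ^ 'n"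
  assumes symm: "transpose Q = Q"
    and x: "x \<in> std_simplex"
    and min: "\<forall>y\<in>std_simplex. x \<bullet> (Q *v x) \<le> y \<bullet> (Q *v y)"
    and i: "0 < x $ i"
  shows "(Q *v x) $ i \<le> (Q *v x) $ j"
proof (rule ccontr)
  assume "\<not> ?thesis"
  then have lt: "(Q *v x) $ j < (Q *v x) $ i" by simp
  then have ij: "i \<noteq> j" by auto
  define d :: "real^'n" where "d = axis j 1 - axis i 1"
  define a where "a = (Q *v x) $ i - (Q *v x) $ j"
  define c where "c = d \<bullet> (Q *v d)"
  define t where "t = min (x $ i) (a / (\<bar>c\<bar> + 1))"
  have a: "a > 0" using lt by (simp add: a_def)
  have t0: "t > 0" using a i by (simp add: t_def)
  have ti: "t \<le> x $ i" by (simp add: t_def)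
  have ta: "t \<le> a / (\<bar>c\<bar> + 1)" by (simp add: t_def)
  have nn: "\<And>k. 0 \<le> x $ k" and s1: "(\<Sum>k\<in>UNIV. x $ k) = 1" using x by (auto simp: std_simplex_def)
  have dx: "d \<bullet> (Q *v x) = - a"
    by (simp add: d_def a_def inner_diff_left inner_axis')
  have ycomp: "(x + t *\<^sub>R d) $ k = x $ k + t * (if k = j then 1 else 0) - t * (if k = i then 1 else 0)" for k
    by (simp add: d_def axis_def algebra_simps)
  have ymem: "x + t *\<^sub>R d \<in> std_simplex"
    unfolding std_simplex_def
  proof (intro CollectI conjI allI)
    fix k
    show "0 \<le> (x + t *\<^sub>R d) $ k" using ycomp[of k] nn[of k] ti t0 ij by auto
  next
    have "(\<Sum>k\<in>UNIV. (x + t *\<^sub>R d) $ k) =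
       (\<Sum>k\<in>UNIV. x $ k) + t * (\<Sum>k\<in>UNIV. (if k = j then 1 else 0)) - t * (\<Sum>k\<in>UNIV. (if k = i then 1 else 0))"
      by (simp only: ycomp sum.distrib sum_subtractf sum_distrib_left)
    then show "(\<Sum>k\<in>UNIV. (x + t *\<^sub>R d) $ k) = 1" using s1 by simp
  qed
  have "t^2 * c \<le> t * (t * \<bar>c\<bar>)" by (simp add: power2_eq_square) (metis abs_ge_self mult_left_mono t0 less_le mult.assoc mult_nonneg_nonneg)
  also have "t * \<bar>c\<bar> < a"
  proof -
    have "t * \<bar>c\<bar> \<le> a / (\<bar>c\<bar> + 1) * \<bar>c\<bar>" by (rule mult_right_mono[OF ta abs_ge_zero])
    also have "\<dots> < a" using a by (simp add: field_simps)
    finally show ?thesis .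
  qed
  then have "t * (t * \<bar>c\<bar>) < t * a" using t0 by simp
  finally have "t^2 * c < t * a" .
  then have "(x + t *\<^sub>R d) \<bullet> (Q *v (x + t *\<^sub>R d)) < x \<bullet> (Q *v x)"
  proof -
    have "t * a > 0" using t0 a by simp
    moreover have "2 * t * (d \<bullet> (Q *v x)) = - 2 * (t * a)" using dx by simp
    ultimately show ?thesis using quad_expand[OF symm, of x t d] \<open>t^2 * c < t * a\<close> unfolding c_def by linarith
  qed
  then show False using min ymem by force
qed

theorem proposition1:
  fixes Q :: "real ^ 'n ^ 'n"
  assumes "transpose Q = Q"
  defines "S \<equiv> {Max ((\<lambda>j. axis j 1 \<bullet> (Q *v x)) ` supp_idx x) | x. x \<in> std_simplex}"
  shows "nu Q \<in> S \<and> (\<forall>y\<in>S. nu Q \<le> y)"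
proof -
  let ?f = "\<lambda>x::real^'n. x \<bullet> (Q *v x)"
  have "continuous_on std_simplex ?f" by (intro continuous_intros)
  then obtain x where x: "x \<in> std_simplex" and min: "\<forall>y\<in>std_simplex. ?f x \<le> ?f y"
    using continuous_attains_inf[OF simplex_compact simplex_nonempty] by blast
  have nuQ: "nu Q = ?f x"
    unfolding nu_def by (rule cInf_eq_minimum) (use x min in auto)
  have lb: "\<forall>y\<in>S. nu Q \<le> y"
  proof
    fix y assume "y \<in> S"
    then obtain z where z: "z \<in> std_simplex" and y: "y = Max ((\<lambda>j. axis j 1 \<bullet> (Q *v z)) ` supp_idx z)"
      by (auto simp: S_def)
    have "nu Q \<le> ?f z" using nuQ min z by simp
    also have "\<dots> \<le> y" using quad_le_max[OF z] y by simp
    finally show "nu Q \<le> y" .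
  qed
  let ?M = "Max ((\<lambda>j. axis j 1 \<bullet> (Q *v x)) ` supp_idx x)"
  have nn: "\<And>k. 0 \<le> x $ k" and s1: "(\<Sum>k\<in>UNIV. x $ k) = 1" using x by (auto simp: std_simplex_def)
  have "?M \<le> ?f x"
  proof (rule Max.boundedI)
    show "finite ((\<lambda>j. axis j 1 \<bullet> (Q *v x)) ` supp_idx x)" by simp
    show "(\<lambda>j. axis j 1 \<bullet> (Q *v x)) ` supp_idx x \<noteq> {}" using quad_le_max(2)[OF x] by simp
  next
    fix v assume "v \<in> (\<lambda>j. axis j 1 \<bullet> (Q *v x)) ` supp_idx x"
    then obtain i where i: "0 < x $ i" and v: "v = (Q *v x) $ i"
      by (auto simp: supp_idx_def inner_axis')
    have "v = (\<Sum>k\<in>UNIV. x $ k * v)" using s1 by (simp add: sum_distrib_right[symmetric])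
    also have "\<dots> \<le> (\<Sum>k\<in>UNIV. x $ k * (Q *v x) $ k)"
      using minimizer_kkt[OF assms(1) x min i] nn v by (intro sum_mono mult_left_mono) auto
    also have "\<dots> = ?f x" by (simp add: quad_sum)
    finally show "v \<le> ?f x" .
  qed
  then have "?M = nu Q" using quad_le_max(1)[OF x, of Q] nuQ by linarith
  then have "nu Q = ?M" by simp
  then have "nu Q \<in> S" unfolding S_def using x by blast
  then show ?thesis using lb by simp
qed

end
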